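(* Let $n\ge 2$, $\ell\ge 1$, and let $\mathcal{L}\in\mathcal{A}(n,n-2,\ell)$. For every $1\le j\le n$, the word $W_j=\mathbf{1}-\mathbf{e}_j$ can be covered only by a codeword of the form $\mathbf{1}-\lambda\mathbf{e}_j$ with $\lambda$ an integer, $1\le\lambda\le\ell+1$.
   Context: $\mathcal{S}(n,t,\ell)=\{\mathcal{E}\in\mathbb{Z}^n: 0\le\varepsilon_i\le\ell \text{ for all } i,\ w_H(\mathcal{E})\le t\}$, with $w_H$ the number of nonzero coordinates. A lattice here is the set of integer combinations of $n$ linearly independent vectors of $\mathbb{Z}^n$. $\mathcal{A}(n,t,\ell)$ is the set of lattices $\mathcal{L}\subseteq\mathbb{Z}^n$ such that the translates $X+\mathcal{S}(n,t,\ell)$, $X\in\mathcal{L}$, are pairwise disjoint; elements of $\mathcal{L}$ are codewords. A codeword $X$ covers $Y\in\mathbb{Z}^n$ if $Y=X+\mathcal{E}$ for some $\mathcal{E}\in\mathcal{S}(n,n-2,\ell)$. $\mathbf{1}$ is the all-one vector and $\mathbf{e}_j$ the $j$-th unit vector. *)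

theory Defs
  imports "HOL-Analysis.Analysis"
begin

text \<open>Vectors of Z^n are represented as int ^ 'n, with n = CARD('n).\<close>

definition hamming_weight :: "int ^ 'n \<Rightarrow> nat" where
  "hamming_weight x = card {i. x $ i \<noteq> 0}"

definition err_set :: "nat \<Rightarrow> int \<Rightarrow> (int ^ 'n) set" where
  "err_set t l = {E. (\<forall>i. 0 \<le> E $ i \<and> E $ i \<le> l) \<and> hamming_weight E \<le> t}"

definition is_lattice :: "(int ^ 'n) set \<Rightarrow> bool" where
  "is_lattice L \<longleftrightarrow> (\<exists>B :: 'n \<Rightarrow> int ^ 'n.
      (\<forall>c :: 'n \<Rightarrow> int. (\<Sum>i\<in>UNIV. c i *s B i) = 0 \<longrightarrow> (\<forall>i. c i = 0)) \<and>
      L = {\<Sum>i\<in>UNIV. c i *s B i | c :: 'n \<Rightarrow> int. True})"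

definition lattice_packings :: "nat \<Rightarrow> int \<Rightarrow> (int ^ 'n) set set" where
  "lattice_packings t l = {L. is_lattice L \<and>
      (\<forall>X\<in>L. \<forall>Y\<in>L. X \<noteq> Y \<longrightarrow>
         ((\<lambda>E. X + E) ` err_set t l) \<inter> ((\<lambda>E. Y + E) ` err_set t l) = {})}"

definition covers :: "int \<Rightarrow> int ^ 'n \<Rightarrow> int ^ 'n \<Rightarrow> bool" where
  "covers l X Y \<longleftrightarrow> (\<exists>E \<in> err_set (CARD('n) - 2) l. Y = X + E)"

definition unit_vec :: "'n \<Rightarrow> int ^ 'n" where
  "unit_vec j = (\<chi> i. if i = j then 1 else 0)"

end

theory Submission
  imports Defs
begin

theorem mainTheorem16:
  fixes L :: "(int ^ 'n) set" and l :: int and j :: 'n and X :: "int ^ 'n"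
  assumes "CARD('n) \<ge> 2" and "l \<ge> 1"
    and "L \<in> lattice_packings (CARD('n) - 2) l"
    and "X \<in> L"
    and "covers l X (1 - unit_vec j)"
  shows "\<exists>lam::int. 1 \<le> lam \<and> lam \<le> l + 1 \<and> X = 1 - lam *s unit_vec j"
proof -
  let ?t = "CARD('n) - 2"
  obtain E where E: "E \<in> err_set ?t l" and W: "1 - unit_vec j = X + E"
    using assms(5) unfolding covers_def by blast
  have Eb: "\<And>i. 0 \<le> E $ i \<and> E $ i \<le> l" and Ew: "card {i. E $ i \<noteq> 0} \<le> ?t"
    using E unfolding err_set_def hamming_weight_def by auto
  have Xc: "\<And>i. X $ i = (if i = j then 0 else 1) - E $ i"
  proof -
    fix i
    have "(1 - unit_vec j) $ i = (X + E) $ i" using W by simp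
    thus "X $ i = (if i = j then 0 else 1) - E $ i" by (auto simp: unit_vec_def split: if_splits)
  qed
  have lat: "is_lattice L" and pack: "\<forall>X\<in>L. \<forall>Y\<in>L. X \<noteq> Y \<longrightarrow>
         ((\<lambda>E. X + E) ` err_set ?t l) \<inter> ((\<lambda>E. Y + E) ` err_set ?t l) = {}"
    using assms(3) unfolding lattice_packings_def by auto
  have zero: "0 \<in> L"
  proof -
    obtain B :: "'n \<Rightarrow> int ^ 'n" where "L = {\<Sum>i\<in>UNIV. c i *s B i | c :: 'n \<Rightarrow> int. True}"
      using lat unfolding is_lattice_def by blast
    moreover have "(\<Sum>i\<in>UNIV. (\<lambda>_. 0::int) i *s B i) \<in> {\<Sum>i\<in>UNIV. c i *s B i | c :: 'n \<Rightarrow> int. True}"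
      by (rule CollectI, rule exI[of _ "\<lambda>_. 0"], simp)
    moreover have "(\<Sum>i\<in>UNIV. (\<lambda>_. 0::int) i *s B i) = 0" by simp
    ultimately show ?thesis by simp
  qed
  have B: "\<forall>k. k \<noteq> j \<longrightarrow> E $ k = 0"
  proof (rule ccontr)
    assume "\<not> ?thesis"
    then obtain k where k: "k \<noteq> j" "E $ k \<noteq> 0" by blast
    define Y :: "int^'n" where "Y = (\<chi> i. max (X $ i) 0)"
    define F where "F = Y - X"
    have Fc: "\<And>i. F $ i = (if i = j then E $ j else max 0 (E $ i - 1))"
      unfolding F_def Y_def using Xc Eb by (auto simp: max_def)
    have F_in: "F \<in> err_set ?t l"
    proof -
      have "{i. F $ i \<noteq> 0} \<subseteq> {i. E $ i \<noteq> 0}" using Fc by (auto simp: max_def split: if_splits)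
      hence "card {i. F $ i \<noteq> 0} \<le> ?t" using Ew by (meson card_mono finite order_trans)
      moreover have "\<forall>i. 0 \<le> F $ i \<and> F $ i \<le> l" 
      proof
        fix i show "0 \<le> F $ i \<and> F $ i \<le> l" using Fc[of i] Eb[of i] assms(2) by (auto simp: max_def)
      qed
      ultimately show ?thesis unfolding err_set_def hamming_weight_def by auto
    qed
    have Yc: "\<And>i. Y $ i = (if i \<noteq> j \<and> E $ i = 0 then 1 else 0)"
    proof -
      fix i show "Y $ i = (if i \<noteq> j \<and> E $ i = 0 then 1 else 0)"
        unfolding Y_def using Xc[of i] Eb[of i] by (auto simp: max_def)
    qed
    have Y_in: "Y \<in> err_set ?t l"
    proof -
      have sub: "{i. Y $ i \<noteq> 0} \<subseteq> UNIV - {j, k}" using Yc k by auto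
      have "card (UNIV - {j, k}) = CARD('n) - 2"
        using k by (simp add: card_Diff_subset)
      hence "card {i. Y $ i \<noteq> 0} \<le> ?t" using card_mono[OF _ sub] by simp
      moreover have "\<forall>i. 0 \<le> Y $ i \<and> Y $ i \<le> l" using Yc assms(2) by auto
      ultimately show ?thesis unfolding err_set_def hamming_weight_def by auto
    qed
    have "X \<noteq> 0"
    proof
      assume X0: "X = 0"
      have "\<forall>i. i \<noteq> j \<longrightarrow> E $ i = 1" 
      proof (intro allI impI)
        fix i assume "i \<noteq> j"
        have "X $ i = 0" using X0 by simp
        thus "E $ i = 1" using Xc[of i] \<open>i \<noteq> j\<close> by simp
      qed
      hence "UNIV - {j} \<subseteq> {i. E $ i \<noteq> 0}" by auto
      hence "card (UNIV - {j}) \<le> card {i. E $ i \<noteq> 0}" by (intro card_mono) auto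
      hence "CARD('n) - 1 \<le> ?t" using Ew by (simp add: card_Diff_subset)
      thus False using assms(1) by linarith
    qed
    moreover have "X + F \<in> (\<lambda>E. X + E) ` err_set ?t l" using F_in by blast
    moreover have "X + F = 0 + Y" unfolding F_def by simp
    moreover have "0 + Y \<in> (\<lambda>E. 0 + E) ` err_set ?t l" using Y_in by blast
    ultimately have "((\<lambda>E. X + E) ` err_set ?t l) \<inter> ((\<lambda>E. 0 + E) ` err_set ?t l) \<noteq> {}"
      by (metis IntI empty_iff)
    moreover have "((\<lambda>E. X + E) ` err_set ?t l) \<inter> ((\<lambda>E. 0 + E) ` err_set ?t l) = {}"
      using pack[rule_format, OF assms(4) zero \<open>X \<noteq> 0\<close>] by simp
    ultimately show False by blast
  qed
  show ?thesis
  proof (intro exI conjI)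
    show "1 \<le> 1 + E $ j" "1 + E $ j \<le> l + 1" using Eb[of j] by auto
    show "X = 1 - (1 + E $ j) *s unit_vec j"
    proof (rule vec_eq_iff[THEN iffD2], rule allI)
      fix i
      show "X $ i = (1 - (1 + E $ j) *s unit_vec j) $ i"
        using Xc[of i] B by (cases "i = j") (simp_all add: unit_vec_def)
    qed
  qed
qed

end
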